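(* Consider a PWA system, as defined in the context, satisfying (A1)–(A5) with $\mu_c=1$. Then its inverse is given by the explicit, anticausal PWA system $x_{k+1}=\overline{\mathbf{A}}_k x_k+\overline{\mathbf{B}}_k y_{k+1}+\overline{\mathbf{F}}_k$, $u_k=\overline{\mathbf{C}}_k x_k+\overline{\mathbf{D}}_k y_{k+1}+\overline{\mathbf{G}}_k$, where $\overline{\mathbf{D}}_k=(C_{k+1}\mathbf{B}_k)^{-1}$, $\overline{\mathbf{C}}_k=-\overline{\mathbf{D}}_kC_{k+1}\mathbf{A}_k$, $\overline{\mathbf{G}}_k=-\overline{\mathbf{D}}_k(C_{k+1}\mathbf{F}_k+G_{k+1})$, $\overline{\mathbf{A}}_k=\mathbf{A}_k+\mathbf{B}_k\overline{\mathbf{C}}_k$, $\overline{\mathbf{B}}_k=\mathbf{B}_k\overline{\mathbf{D}}_k$, $\overline{\mathbf{F}}_k=\mathbf{F}_k+\mathbf{B}_k\overline{\mathbf{G}}_k$.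
   Context: A discrete-time piecewise affine (PWA) system is $x_{k+1}=\mathbf{A}_k x_k+\mathbf{B}_k u_k+\mathbf{F}_k$, $y_k=\mathbf{C}_k x_k+\mathbf{D}_k u_k+\mathbf{G}_k$, $k\in\mathbb{Z}$, with state $x_k\in\mathbb{R}^{n_x}$, input $u_k\in\mathbb{R}^{n_u}$, output $y_k\in\mathbb{R}^{n_y}$. For each $M\in\{A,B,F,C,D,G\}$, $\mathbf{M}_k=\sum_{q=1}^{|Q|} M_{q,k}K_q(\delta_k)$, where the $M_{q,k}$ are real matrices (possibly time-varying), $\delta_k=\delta(x_k)=H(Px_k-\theta)$ with $H$ the elementwise Heaviside step function, $P\in\mathbb{R}^{n_P\times n_x}$, $\theta\in\mathbb{R}^{n_P}$, and $K_q(\delta)=1$ if $\delta\in\Delta^*_q$ and $0$ otherwise ($\Delta^*_q$ a set of binary vectors). The locations $Q_q=\{x:\delta(x)\in\Delta^*_q\}$ are disjoint, have union $\mathbb{R}^{n_x}$, and each is a union of disjoint convex polytopes. The $q$-th component model is the affine system with matrices $A_{q,k},\dots,G_{q,k}$ and relative degree $\mu_q$ (number of time steps for an input value to influence the output). Assumptions: (A1) $x_0$ lies in the set of initial conditions from which every location is reachable in finite time; (A2) single-input single-output; (A3) switching depends only on the state, not the input; (A4) all component models have the same relative degree $\mu_c$ for all $q$ and $k$; (A5) $\mathbf{C}_k=C_k$, $\mathbf{D}_k=D_k$, $\mathbf{G}_k=G_k$, where $C_k,D_k,G_k$ may vary with time but are identical for all locations and known for all $k$. The inverse is explicit in that $u_k$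 and $x_{k+1}$ are given directly as functions of $x_k$ and $y_{k+1}$ (the selector functions being evaluated at $x_k$); it is anticausal since $u_k$ depends on the future output $y_{k+1}$. *)

theory Defs
  imports "HOL-Analysis.Analysis"
begin

definition heaviside :: "real \<Rightarrow> real" where
  "heaviside s = (if s \<ge> 0 then 1 else 0)"

definition pwa_delta :: "real^'n^'p \<Rightarrow> real^'p \<Rightarrow> real^'n \<Rightarrow> real^'p" where
  "pwa_delta P \<theta> x = (\<chi> i. heaviside ((P *v x - \<theta>) $ i))"

definition pwa_K :: "('q \<Rightarrow> (real^'p) set) \<Rightarrow> 'q \<Rightarrow> real^'p \<Rightarrow> real" where
  "pwa_K Dl q d = (if d \<in> Dl q then 1 else 0)"

definition pwa_mat :: "real^'n^'p \<Rightarrow> real^'p \<Rightarrow> ('q::finite \<Rightarrow> (real^'p) set)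
     \<Rightarrow> ('q \<Rightarrow> int \<Rightarrow> 'a::real_vector) \<Rightarrow> int \<Rightarrow> real^'n \<Rightarrow> 'a" where
  "pwa_mat P \<theta> Dl M k x = (\<Sum>q\<in>UNIV. pwa_K Dl q (pwa_delta P \<theta> x) *\<^sub>R M q k)"

definition outer :: "real^'n \<Rightarrow> real^'n \<Rightarrow> real^'n^'n" where
  "outer b c = (\<chi> i j. b $ i * c $ j)"

fun trans_mat :: "('q \<Rightarrow> int \<Rightarrow> real^'n^'n) \<Rightarrow> 'q \<Rightarrow> int \<Rightarrow> nat \<Rightarrow> real^'n^'n" where
  "trans_mat A q s 0 = mat 1"
| "trans_mat A q s (Suc j) = A q (s + int j) ** trans_mat A q s j"

text \<open>Markov parameter of component model q: influence of input at time k on the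
  output at time k+j.\<close>
fun markov :: "('q \<Rightarrow> int \<Rightarrow> real^'n^'n) \<Rightarrow> ('q \<Rightarrow> int \<Rightarrow> real^'n) \<Rightarrow> (int \<Rightarrow> real^'n)
     \<Rightarrow> (int \<Rightarrow> real) \<Rightarrow> 'q \<Rightarrow> int \<Rightarrow> nat \<Rightarrow> real" where
  "markov A B C D q k 0 = D k"
| "markov A B C D q k (Suc j) = C (k + int j + 1) \<bullet> (trans_mat A q (k + 1) j *v B q k)"

definition has_rel_deg :: "('q \<Rightarrow> int \<Rightarrow> real^'n^'n) \<Rightarrow> ('q \<Rightarrow> int \<Rightarrow> real^'n) \<Rightarrow> (int \<Rightarrow> real^'n)
     \<Rightarrow> (int \<Rightarrow> real) \<Rightarrow> 'q \<Rightarrow> int \<Rightarrow> nat \<Rightarrow> bool" where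
  "has_rel_deg A B C D q k \<mu> \<longleftrightarrow> (\<forall>j<\<mu>. markov A B C D q k j = 0) \<and> markov A B C D q k \<mu> \<noteq> 0"

definition all_locations_reachable ::
  "real^'n^'p \<Rightarrow> real^'p \<Rightarrow> ('q::finite \<Rightarrow> (real^'p) set)
   \<Rightarrow> ('q \<Rightarrow> int \<Rightarrow> real^'n^'n) \<Rightarrow> ('q \<Rightarrow> int \<Rightarrow> real^'n) \<Rightarrow> ('q \<Rightarrow> int \<Rightarrow> real^'n)
   \<Rightarrow> real^'n \<Rightarrow> bool" where
  "all_locations_reachable P \<theta> Dl A B F x0 \<longleftrightarrow>
     (\<forall>q. \<exists>(x::int \<Rightarrow> real^'n) (u::int \<Rightarrow> real) (N::nat).
        x 0 = x0 \<and>
        (\<forall>k\<ge>0. x (k+1) = pwa_mat P \<theta> Dl A k (x k) *v x k + u k *\<^sub>R pwa_mat P \<theta> Dl B k (x k)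
                           + pwa_mat P \<theta> Dl F k (x k)) \<and>
        pwa_delta P \<theta> (x (int N)) \<in> Dl q)"

end

theory Submission
  imports Defs
begin


lemma outer_mulv: "outer b c *v x = (c \<bullet> x) *\<^sub>R (b::real^'n)"
  by (simp add: outer_def matrix_vector_mult_def inner_vec_def vec_eq_iff sum_distrib_left mult.commute mult.left_commute)

lemma pwa_mat_unique:
  assumes "\<And>z. \<exists>!q. pwa_delta P \<theta> z \<in> Dl q" and "pwa_delta P \<theta> z \<in> Dl q0"
  shows "pwa_mat P \<theta> Dl M k z = M q0 k"
proof -
  have "pwa_mat P \<theta> Dl M k z = (\<Sum>q\<in>UNIV. if q = q0 then M q k else 0)"
    unfolding pwa_mat_def
  proof (rule sum.cong[OF refl])
    fix q
    show "pwa_K Dl q (pwa_delta P \<theta> z) *\<^sub>R M q k = (if q = q0 then M q k else 0)"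
      using assms by (auto simp: pwa_K_def)
  qed
  also have "\<dots> = M q0 k" by simp
  finally show ?thesis .
qed

lemma step_equiv:
  fixes a :: "real^'n^'n" and b f c x x' :: "real^'n" and u y' g :: real
  assumes cb: "c \<bullet> b \<noteq> 0"
  shows "(x' = a *v x + u *\<^sub>R b + f \<and> y' = c \<bullet> x' + g) \<longleftrightarrow>
    (let Dbar = inverse (c \<bullet> b);
              Cbar = - (Dbar *\<^sub>R (c v* a));
              Gbar = - (Dbar * (c \<bullet> f + g));
              Abar = a + outer b Cbar;
              Bbar = Dbar *\<^sub>R b;
              Fbar = f + Gbar *\<^sub>R b
          in x' = Abar *v x + y' *\<^sub>R Bbar + Fbar
             \<and> u = Cbar \<bullet> x + Dbar * y' + Gbar)"
proof -
  define d where "d = inverse (c \<bullet> b)"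
  have cd: "(c \<bullet> b) * d = 1" using cb by (simp add: d_def)
  have ux: "(- (d *\<^sub>R (c v* a))) \<bullet> x = - d * (c \<bullet> (a *v x))"
    by (simp add: dot_lmul_matrix)
  have Ab: "(a + outer b (- (d *\<^sub>R (c v* a)))) *v x = a *v x - (d * (c \<bullet> (a *v x))) *\<^sub>R b"
    by (simp add: matrix_vector_mult_add_rdistrib outer_mulv dot_lmul_matrix)
  have "(x' = a *v x + u *\<^sub>R b + f \<and> y' = c \<bullet> x' + g) \<longleftrightarrow>
     (x' = a *v x + u *\<^sub>R b + f \<and> u = d * (y' - c \<bullet> (a *v x) - c \<bullet> f - g))"
  proof
    assume h: "x' = a *v x + u *\<^sub>R b + f \<and> y' = c \<bullet> x' + g"
    then have "y' = c \<bullet> (a *v x) + u * (c \<bullet> b) + c \<bullet> f + g"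
      by (simp add: inner_add_right)
    then have "d * (y' - c \<bullet> (a *v x) - c \<bullet> f - g) = u * ((c \<bullet> b) * d)"
      by (simp add: algebra_simps)
    then show "x' = a *v x + u *\<^sub>R b + f \<and> u = d * (y' - c \<bullet> (a *v x) - c \<bullet> f - g)"
      using h cd by simp
  next
    assume h: "x' = a *v x + u *\<^sub>R b + f \<and> u = d * (y' - c \<bullet> (a *v x) - c \<bullet> f - g)"
    then have "c \<bullet> x' + g = c \<bullet> (a *v x) + u * (c \<bullet> b) + c \<bullet> f + g"
      by (simp add: inner_add_right)
    also have "u * (c \<bullet> b) = ((c \<bullet> b) * d) * (y' - c \<bullet> (a *v x) - c \<bullet> f - g)"
      using h by simp
    finally have "c \<bullet> x' + g = c \<bullet> (a *v x) + ((c \<bullet> b) * d) * (y' - c \<bullet> (a *v x) - c \<bullet> f - g) + c \<bullet> f + g" .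
    then show "x' = a *v x + u *\<^sub>R b + f \<and> y' = c \<bullet> x' + g" using h cd by simp
  qed
  also have "\<dots> \<longleftrightarrow> (x' = (a *v x - (d * (c \<bullet> (a *v x))) *\<^sub>R b) + y' *\<^sub>R (d *\<^sub>R b)
        + (f + (- (d * (c \<bullet> f + g))) *\<^sub>R b)
      \<and> u = - d * (c \<bullet> (a *v x)) + d * y' + - (d * (c \<bullet> f + g)))"
  proof -
    have "d * (y' - c \<bullet> (a *v x) - c \<bullet> f - g) = - d * (c \<bullet> (a *v x)) + d * y' + - (d * (c \<bullet> f + g))"
      by (simp add: algebra_simps)
    moreover have "a *v x + (d * (y' - c \<bullet> (a *v x) - c \<bullet> f - g)) *\<^sub>R b + f = (a *v x - (d * (c \<bullet> (a *v x))) *\<^sub>R b) + y' *\<^sub>R (d *\<^sub>R b)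
        + (f + (- (d * (c \<bullet> f + g))) *\<^sub>R b)"
      by (simp add: algebra_simps)
    ultimately show ?thesis by metis
  qed
  finally show ?thesis unfolding Let_def d_def[symmetric] Ab ux .
qed

theorem corollary1:
  fixes P :: "real^'n^'p" and \<theta> :: "real^'p"
    and Dl :: "'q::finite \<Rightarrow> (real^'p) set"
    and A :: "'q \<Rightarrow> int \<Rightarrow> real^'n^'n" and B F :: "'q \<Rightarrow> int \<Rightarrow> real^'n"
    and C :: "int \<Rightarrow> real^'n" and D G :: "int \<Rightarrow> real"
    and x0 :: "real^'n"
  assumes partition: "\<And>z. \<exists>!q. pwa_delta P \<theta> z \<in> Dl q"
    and binary: "\<And>q. Dl q \<subseteq> {d. \<forall>i. d $ i \<in> {0, 1}}"
    and A1: "all_locations_reachable P \<theta> Dl A B F x0"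
    and A4: "\<And>q k. has_rel_deg A B C D q k 1"
  shows "\<forall>(x::int \<Rightarrow> real^'n) (u::int \<Rightarrow> real) (y::int \<Rightarrow> real). x 0 = x0 \<longrightarrow>
    ((\<forall>k. x (k+1) = pwa_mat P \<theta> Dl A k (x k) *v x k + u k *\<^sub>R pwa_mat P \<theta> Dl B k (x k)
                     + pwa_mat P \<theta> Dl F k (x k)
         \<and> y k = C k \<bullet> x k + D k * u k + G k)
     \<longleftrightarrow>
     (\<forall>k. let Ak = pwa_mat P \<theta> Dl A k (x k); Bk = pwa_mat P \<theta> Dl B k (x k);
              Fk = pwa_mat P \<theta> Dl F k (x k);
              Dbar = inverse (C (k+1) \<bullet> Bk);
              Cbar = - (Dbar *\<^sub>R (C (k+1) v* Ak));
              Gbar = - (Dbar * (C (k+1) \<bullet> Fk + G (k+1)));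
              Abar = Ak + outer Bk Cbar;
              Bbar = Dbar *\<^sub>R Bk;
              Fbar = Fk + Gbar *\<^sub>R Bk
          in x (k+1) = Abar *v x k + y (k+1) *\<^sub>R Bbar + Fbar
             \<and> u k = Cbar \<bullet> x k + Dbar * y (k+1) + Gbar))"
  apply (intro allI impI)
  subgoal for x u y
  proof -
  have D0: "D k = 0" for k using A4[of _ k] by (simp add: has_rel_deg_def)
  have cb: "C (k+1) \<bullet> pwa_mat P \<theta> Dl B k (x k) \<noteq> 0" for k
  proof -
    obtain q where q: "pwa_delta P \<theta> (x k) \<in> Dl q" using partition by blast
    have "pwa_mat P \<theta> Dl B k (x k) = B q k" using pwa_mat_unique[OF partition q] .
    moreover have "C (k + 1) \<bullet> B q k \<noteq> 0" using A4[of q k] by (simp add: has_rel_deg_def)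
    ultimately show ?thesis by simp
  qed
  have shift: "(\<forall>k. y k = C k \<bullet> x k + G k) \<longleftrightarrow> (\<forall>k. y (k+1) = C (k+1) \<bullet> x (k+1) + G (k+1))"
    by (metis diff_add_cancel)
  have eq: "(\<forall>k. x (k+1) = pwa_mat P \<theta> Dl A k (x k) *v x k + u k *\<^sub>R pwa_mat P \<theta> Dl B k (x k)
                     + pwa_mat P \<theta> Dl F k (x k)
         \<and> y k = C k \<bullet> x k + D k * u k + G k) \<longleftrightarrow>
      (\<forall>k. x (k+1) = pwa_mat P \<theta> Dl A k (x k) *v x k + u k *\<^sub>R pwa_mat P \<theta> Dl B k (x k)
                     + pwa_mat P \<theta> Dl F k (x k)
         \<and> y (k+1) = C (k+1) \<bullet> x (k+1) + G (k+1))"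
    using shift by (auto simp: D0)
  show "?thesis"
    unfolding eq
    apply (rule iff_allI)
    subgoal for k
      using step_equiv[OF cb[of k]] by (simp only: Let_def)
    done
qed
  done

end
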